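(* Let $q_1,\ldots,q_t$ be positive integers, $d=\sum_{k=1}^t q_k$, and let $G=K_{q_1,\ldots,q_t}$ be the complete multipartite graph of type $(q_1,\ldots,q_t)$. Then the Ehrhart polynomial of the edge polytope of $G$ is \[ i(\mathcal{P}_G,m)=f(m;d,d)-\sum_{k=1}^t f(m;d,q_k), \] where \[ f(m;d,j)=\sum_{k=1}^{j}p(m;d,k),\qquad p(m;d,j)=\binom{j+m-1}{j-1}\binom{d-j+m-1}{d-j}. \]
   Context: The complete multipartite graph $K_{q_1,\ldots,q_t}$ has vertex set a disjoint union $V_1\cup\cdots\cup V_t$ with $|V_i|=q_i$ and edge set $\{\{u,v\}: u\in V_i, v\in V_j, i\ne j\}$; label its vertices $1,\ldots,d$. For an edge $e=\{i,j\}$ set $\rho(e)=\mathbf{e}_i+\mathbf{e}_j\in\mathbb{R}^d$ ($\mathbf{e}_i$ the unit coordinate vectors). The edge polytope $\mathcal{P}_G$ is the convex hull of $\{\rho(e):e\in E(G)\}$. The Ehrhart polynomial $i(\mathcal{P},m)$ of an integral polytope $\mathcal{P}\subset\mathbb{R}^d$ is the polynomial with $i(\mathcal{P},m)=\#(m\mathcal{P}\cap\mathbb{Z}^d)$ for integers $m\ge0$. Binomial coefficients $\binom{a+m}{a}$ with $a\ge 0$ an integer are regarded as polynomials in $m$, namely $\prod_{i=1}^{a}(m+i)/a!$. *)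

theory Defs
  imports "HOL-Analysis.Analysis"
begin

text \<open>Vertices of the complete multipartite graph are the elements of a finite type 'n;
  col v gives the index of the col containing v. u v form an edge iff col u \<noteq> col v.\<close>

definition cmp_edge_vectors :: "('n::finite \<Rightarrow> nat) \<Rightarrow> (real ^ 'n) set" where
  "cmp_edge_vectors col =
     {axis u 1 + axis v 1 | u v. col u \<noteq> col v}"

definition edge_polytope :: "('n::finite \<Rightarrow> nat) \<Rightarrow> (real ^ 'n) set" where
  "edge_polytope col = convex hull (cmp_edge_vectors col)"

definition lattice_count :: "(real ^ 'n::finite) set \<Rightarrow> nat \<Rightarrow> nat" where
  "lattice_count P m = card {x \<in> (\<lambda>y. real m *\<^sub>R y) ` P. \<forall>i. x $ i \<in> \<int>}"

text \<open>p(m;d,j) and f(m;d,j), binomials read as polynomials in m.\<close>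
definition pp :: "nat \<Rightarrow> nat \<Rightarrow> nat \<Rightarrow> real" where
  "pp m d j = ((real j + real m - 1) gchoose (j - 1)) *
              ((real d - real j + real m - 1) gchoose (d - j))"

definition ff :: "nat \<Rightarrow> nat \<Rightarrow> nat \<Rightarrow> real" where
  "ff m d j = (\<Sum>k = 1..j. pp m d k)"

end

theory Submission
  imports Defs
begin


definition cc :: "nat \<Rightarrow> nat \<Rightarrow> nat" where "cc k n = (n + k - 1) choose n"

lemma cc0: "cc 0 n = (if n = 0 then 1 else 0)"
  by (simp add: cc_def)

lemma cc_sum: "(\<Sum>a\<le>s. cc q a) = cc (Suc q) s"
proof (cases q)
  case 0
  have "(\<Sum>a\<le>s. cc q a) = (\<Sum>a\<le>s. if a = 0 then 1 else 0)" using 0 by (simp add: cc0)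
  also have "\<dots> = 1" by (simp add: sum.delta)
  finally show ?thesis using 0 by (simp add: cc_def)
next
  case (Suc r)
  have "(\<Sum>a\<le>s. cc q a) = (\<Sum>a\<le>s. (r + a) choose a)" using Suc by (simp add: cc_def add.commute)
  also have "\<dots> = Suc (r + s) choose s" by (rule sum_choose_lower)
  finally show ?thesis using Suc by (simp add: cc_def add.commute)
qed

lemma sum_rev_idx: fixes f :: "nat \<Rightarrow> nat" assumes "a \<le> b" shows "(\<Sum>s\<in>{a..b}. f (b - s)) = (\<Sum>r\<le>b-a. f r)"
proof (rule sum.reindex_bij_witness[of _ "\<lambda>r. b - r" "\<lambda>s. b - s"])
  fix s assume "s \<in> {a..b}" then show "b - (b - s) = s" "b - s \<in> {..b-a}" by auto
next
  fix r assume "r \<in> {..b-a}" then show "b - (b - r) = r" "b - r \<in> {a..b}" using assms by auto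
qed simp

definition LL :: "nat \<Rightarrow> nat \<Rightarrow> nat \<Rightarrow> nat" where
  "LL m q e = (\<Sum>s\<in>{m+1..2*m}. cc q s * cc e (2*m - s))"

definition Rd :: "nat \<Rightarrow> nat \<Rightarrow> nat \<Rightarrow> nat" where
  "Rd m d q = (\<Sum>j\<in>{1..q}. ((j+m-1) choose (j-1)) * ((d-j+m-1) choose (d-j)))"

lemma split_le: fixes f :: "nat \<Rightarrow> nat" shows "m \<le> s \<Longrightarrow> (\<Sum>a\<le>s. f a) = (\<Sum>a\<le>m. f a) + (\<Sum>a\<in>{m+1..s}. (f a::nat))"
  using sum_up_index_split[of f m "s - m"] by simp

lemma LL_step:
  assumes m: "m \<ge> 1"
  shows "LL m (Suc q) e = LL m q (Suc e) + cc (Suc q) m * cc (Suc e) (m - 1)"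
proof -
  have "LL m (Suc q) e = (\<Sum>s\<in>{m+1..2*m}. (\<Sum>a\<le>s. cc q a) * cc e (2*m - s))"
    by (simp add: LL_def cc_sum)
  also have "\<dots> = (\<Sum>s\<in>{m+1..2*m}. (\<Sum>a\<le>m. cc q a) * cc e (2*m - s)
          + (\<Sum>a\<in>{m+1..s}. cc q a * cc e (2*m - s)))"
  proof (rule sum.cong)
    fix s assume "s \<in> {m+1..2*m}"
    then have "(\<Sum>a\<le>s. cc q a) = (\<Sum>a\<le>m. cc q a) + (\<Sum>a\<in>{m+1..s}. cc q a)"
      by (intro split_le) simp
    then show "(\<Sum>a\<le>s. cc q a) * cc e (2*m - s) = (\<Sum>a\<le>m. cc q a) * cc e (2*m - s)
          + (\<Sum>a\<in>{m+1..s}. cc q a * cc e (2*m - s))"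
      by (simp add: sum_distrib_right algebra_simps)
  qed simp
  also have "\<dots> = (\<Sum>a\<le>m. cc q a) * (\<Sum>s\<in>{m+1..2*m}. cc e (2*m - s))
          + (\<Sum>s\<in>{m+1..2*m}. \<Sum>a\<in>{m+1..s}. cc q a * cc e (2*m - s))"
    by (simp add: sum.distrib sum_distrib_left)
  also have "(\<Sum>s\<in>{m+1..2*m}. cc e (2*m - s)) = cc (Suc e) (m - 1)"
    using m by (subst sum_rev_idx) (auto simp: cc_sum)
  also have "(\<Sum>s\<in>{m+1..2*m}. \<Sum>a\<in>{m+1..s}. cc q a * cc e (2*m - s))
        = (\<Sum>s\<in>{m+1..2*m}. \<Sum>a\<in>{a. a \<in> {m+1..2*m} \<and> a \<le> s}. cc q a * cc e (2*m - s))"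
    by (rule sum.cong) (auto intro!: sum.cong)
  also have "\<dots> = (\<Sum>a\<in>{m+1..2*m}. \<Sum>s\<in>{s. s \<in> {m+1..2*m} \<and> a \<le> s}. cc q a * cc e (2*m - s))"
    by (rule sum.swap_restrict) auto
  also have "\<dots> = (\<Sum>a\<in>{m+1..2*m}. cc q a * (\<Sum>s\<in>{a..2*m}. cc e (2*m - s)))"
    by (rule sum.cong) (auto simp: sum_distrib_left intro!: sum.cong)
  also have "\<dots> = (\<Sum>a\<in>{m+1..2*m}. cc q a * cc (Suc e) (2*m - a))"
    by (rule sum.cong) (auto simp: sum_rev_idx cc_sum)
  finally show ?thesis by (simp add: LL_def cc_sum)
qed

lemma LL_Rd: assumes m: "m \<ge> 1" shows "LL m q e = Rd m (q + e) q"
proof (induction q arbitrary: e)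
  case 0
  show ?case by (simp add: LL_def Rd_def cc0)
next
  case (Suc q)
  have "LL m (Suc q) e = Rd m (q + Suc e) q + cc (Suc q) m * cc (Suc e) (m - 1)"
    using LL_step[OF m] Suc by simp
  moreover have "cc (Suc q) m = (Suc q + m - 1) choose (Suc q - 1)"
    using binomial_symmetric[of q "q+m"] by (simp add: cc_def add.commute)
  moreover have "cc (Suc e) (m - 1) = ((Suc q + e) - Suc q + m - 1) choose ((Suc q + e) - Suc q)"
    using binomial_symmetric[of e "e+m-1"] m by (simp add: cc_def add.commute)
  ultimately show ?case by (simp add: Rd_def)
qed




definition compn :: "'a set \<Rightarrow> nat \<Rightarrow> ('a \<Rightarrow> nat) set" where
  "compn A n = {g. (\<forall>x. x \<notin> A \<longrightarrow> g x = 0) \<and> sum g A = n}"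

lemma comp_finite: assumes "finite A" shows "finite (compn A n)"
proof -
  have "compn A n \<subseteq> {f. \<forall>x. (x \<in> A \<longrightarrow> f x \<in> {..n}) \<and> (x \<notin> A \<longrightarrow> f x = 0)}"
  proof
    fix g assume g: "g \<in> compn A n"
    { fix x assume "x \<in> A"
      then have "g x \<le> sum g A" using assms by (intro member_le_sum) auto
      then have "g x \<le> n" using g by (simp add: compn_def) }
    then show "g \<in> {f. \<forall>x. (x \<in> A \<longrightarrow> f x \<in> {..n}) \<and> (x \<notin> A \<longrightarrow> f x = 0)}"
      using g by (auto simp: compn_def)
  qed
  then show ?thesis using finite_set_of_finite_funs[OF assms, of "{..n}" 0] finite_subset by blast
qed

lemma comp_card: assumes "finite A" shows "card (compn A n) = cc (card A) n"
  using assms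
proof (induction A arbitrary: n rule: finite_induct)
  case empty
  have "compn ({}::'a set) n = (if n = 0 then {\<lambda>_. 0} else {})" by (auto simp: compn_def)
  then show ?case by (cases "n = 0") (simp_all add: cc0)
next
  case (insert a A)
  have bij: "bij_betw (\<lambda>g. (g a, g(a := 0))) (compn (insert a A) n) (SIGMA i:{..n}. compn A (n - i))"
  proof (rule bij_betw_byWitness[where f' = "\<lambda>(i, h). h(a := i)"])
    show "\<forall>g\<in>compn (insert a A) n. (\<lambda>(i, h). h(a := i)) (g a, g(a := 0)) = g" by auto
    show "\<forall>p\<in>(SIGMA i:{..n}. compn A (n - i)). (\<lambda>g. (g a, g(a := 0))) ((\<lambda>(i, h). h(a := i)) p) = p"
      using insert by (auto simp: compn_def)
    show "(\<lambda>g. (g a, g(a := 0))) ` compn (insert a A) n \<subseteq> (SIGMA i:{..n}. compn A (n - i))"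
    proof clarsimp
      fix g assume g: "g \<in> compn (insert a A) n"
      then have s: "g a + sum g A = n" using insert by (simp add: compn_def)
      have "sum (g(a:=0)) A = sum g A" using insert by (intro sum.cong) auto
      then show "g a \<le> n \<and> g(a := 0) \<in> compn A (n - g a)" using g s by (auto simp: compn_def)
    qed
    show "(\<lambda>(i, h). h(a := i)) ` (SIGMA i:{..n}. compn A (n - i)) \<subseteq> compn (insert a A) n"
    proof clarsimp
      fix i h assume i: "i \<le> n" and h: "h \<in> compn A (n - i)"
      have "sum (h(a:=i)) A = sum h A" using insert by (intro sum.cong) auto
      then show "h(a := i) \<in> compn (insert a A) n" using i h insert by (auto simp: compn_def)
    qed
  qed
  have "card (compn (insert a A) n) = card (SIGMA i:{..n}. compn A (n - i))"
    using bij_betw_same_card[OF bij] .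
  also have "\<dots> = (\<Sum>i\<le>n. cc (card A) (n - i))"
    using insert comp_finite by (subst card_SigmaI) auto
  also have "\<dots> = (\<Sum>i\<in>{0..n}. cc (card A) (n - i))" by (simp add: atLeast0AtMost)
  also have "\<dots> = (\<Sum>r\<le>n. cc (card A) r)" using sum_rev_idx[of 0 n "cc (card A)"] by simp
  also have "\<dots> = cc (card (insert a A)) n" using insert by (simp add: cc_sum)
  finally show ?case .
qed

lemma split_card:
  fixes V :: "'n::finite set"
  assumes "s \<le> N"
  shows "card {g::'n \<Rightarrow> nat. sum g UNIV = N \<and> sum g V = s} = cc (card V) s * cc (card (- V)) (N - s)"
proof -
  have su: "sum g UNIV = sum g V + sum g (-V)" for g :: "'n \<Rightarrow> nat"
    using sum.union_disjoint[of V "-V" g] by (simp add: Un_commute)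
  have sV: "sum (\<lambda>x. if x \<in> V then g x else 0) V = sum g V" for g :: "'n \<Rightarrow> nat"
    by (rule sum.cong) auto
  have sC: "sum (\<lambda>x. if x \<in> V then 0 else g x) (-V) = sum g (-V)" for g :: "'n \<Rightarrow> nat"
    by (rule sum.cong) auto
  have bij: "bij_betw (\<lambda>g. (\<lambda>x. if x \<in> V then g x else 0, \<lambda>x. if x \<in> V then 0 else g x))
     {g::'n \<Rightarrow> nat. sum g UNIV = N \<and> sum g V = s} (compn V s \<times> compn (-V) (N - s))"
  proof (rule bij_betw_byWitness[where f' = "\<lambda>(h1, h2) x. h1 x + h2 x"])
    show "\<forall>g\<in>{g::'n \<Rightarrow> nat. sum g UNIV = N \<and> sum g V = s}.
      (\<lambda>(h1, h2) x. h1 x + h2 x) (\<lambda>x. if x \<in> V then g x else 0, \<lambda>x. if x \<in> V then 0 else g x) = g"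
      by auto
    show "\<forall>p\<in>compn V s \<times> compn (- V) (N - s).
       (\<lambda>g. (\<lambda>x. if x \<in> V then g x else 0, \<lambda>x. if x \<in> V then 0 else g x)) ((\<lambda>(h1, h2) x. h1 x + h2 x) p) = p"
      by (auto simp: compn_def fun_eq_iff)
    show "(\<lambda>g. (\<lambda>x. if x \<in> V then g x else 0, \<lambda>x. if x \<in> V then 0 else g x)) `
       {g::'n \<Rightarrow> nat. sum g UNIV = N \<and> sum g V = s} \<subseteq> compn V s \<times> compn (- V) (N - s)"
      using su sV sC by (force simp: compn_def)
    show "(\<lambda>(h1, h2) x. h1 x + h2 x) ` (compn V s \<times> compn (- V) (N - s))
         \<subseteq> {g::'n \<Rightarrow> nat. sum g UNIV = N \<and> sum g V = s}"
    proof clarsimp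
      fix h1 h2 assume h1: "h1 \<in> compn V s" and h2: "h2 \<in> compn (-V) (N - s)"
      have a: "sum (\<lambda>x. h1 x + h2 x) V = s" using h1 h2
        by (auto simp: compn_def sum.distrib intro!: sum.neutral)
      have b: "sum (\<lambda>x. h1 x + h2 x) (-V) = N - s" using h1 h2
        by (auto simp: compn_def sum.distrib intro!: sum.neutral)
      show "sum (\<lambda>x. h1 x + h2 x) UNIV = N \<and> sum (\<lambda>x. h1 x + h2 x) V = s"
        using a b su[of "\<lambda>x. h1 x + h2 x"] assms by simp
    qed
  qed
  show ?thesis using bij_betw_same_card[OF bij]
    by (simp add: card_cartesian_product comp_card)
qed




lemma three_parts:
  fixes g :: "'n::finite \<Rightarrow> nat"
  assumes "a \<noteq> b" "a \<noteq> c" "b \<noteq> c"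
  shows "sum g {v. col v = a} + sum g {v. col v = b} + sum g {v. col v = c} \<le> sum g UNIV"
proof -
  have "sum g ({v. col v = a} \<union> {v. col v = b} \<union> {v. col v = c})
      = sum g {v. col v = a} + sum g {v. col v = b} + sum g {v. col v = c}"
    using assms by (subst sum.union_disjoint; (subst sum.union_disjoint)?) auto
  moreover have "sum g ({v. col v = a} \<union> {v. col v = b} \<union> {v. col v = c}) \<le> sum g UNIV"
    by (rule sum_mono2) auto
  ultimately show ?thesis by simp
qed

lemma two_parts:
  fixes g :: "'n::finite \<Rightarrow> nat"
  shows "sum g UNIV = sum g {v. col v = a} + sum g {v. col v \<noteq> a}"
proof -
  have "sum g UNIV = sum g ({v. col v = a} \<union> {v. col v \<noteq> a})" by (rule arg_cong[of _ _ "sum g"]) auto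
  also have "\<dots> = sum g {v. col v = a} + sum g {v. col v \<noteq> a}" by (rule sum.union_disjoint) auto
  finally show ?thesis .
qed

lemma pos_in_sum:
  fixes g :: "'n::finite \<Rightarrow> nat"
  assumes "sum g S > 0"
  shows "\<exists>v\<in>S. g v > 0"
proof (rule ccontr)
  assume "\<not> (\<exists>v\<in>S. g v > 0)"
  then have "sum g S = 0" by (intro sum.neutral) auto
  with assms show False by simp
qed

lemma decomp:
  fixes g :: "'n::finite \<Rightarrow> nat" and col :: "'n \<Rightarrow> nat"
  assumes "sum g UNIV = 2 * m" "\<And>k. sum g {v. col v = k} \<le> m"
  shows "\<exists>f. (\<forall>i<m. col (fst (f i)) \<noteq> col (snd (f i))) \<and>
             (\<forall>w. g w = (\<Sum>i<m. (if fst (f i) = w then 1 else 0) + (if snd (f i) = w then 1 else 0)))"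
  using assms
proof (induction m arbitrary: g)
  case 0
  then have "\<forall>w. g w = 0" by simp
  then show ?case by simp
next
  case (Suc m)
  define W where "W k = sum g {v. col v = k}" for k
  have Wle: "W k \<le> Suc m" for k using Suc.prems(2) by (simp add: W_def)
  obtain u where u: "g u > 0" "(\<exists>k. W k = Suc m) \<longrightarrow> W (col u) = Suc m"
  proof (cases "\<exists>k. W k = Suc m")
    case True
    then obtain k where "W k = Suc m" by blast
    then obtain v where "v \<in> {v. col v = k}" "g v > 0" using pos_in_sum[of g "{v. col v = k}"]
      by (auto simp: W_def)
    then show ?thesis using that \<open>W k = Suc m\<close> by auto
  next
    case False
    obtain v where "g v > 0" using pos_in_sum[of g UNIV] Suc.prems(1) by auto
    then show ?thesis using that False by auto
  qed
  have rest: "sum g {v. col v \<noteq> col u} \<ge> Suc m"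
    using two_parts[of g col "col u"] Suc.prems(1) Wle[of "col u"] by (simp add: W_def)
  obtain v where v: "col v \<noteq> col u" "g v > 0"
    "(\<exists>k. k \<noteq> col u \<and> W k = Suc m) \<longrightarrow> W (col v) = Suc m"
  proof (cases "\<exists>k. k \<noteq> col u \<and> W k = Suc m")
    case True
    then obtain k where k: "k \<noteq> col u" "W k = Suc m" by blast
    then obtain v where "v \<in> {v. col v = k}" "g v > 0" using pos_in_sum[of g "{v. col v = k}"]
      by (auto simp: W_def)
    then show ?thesis using that k by auto
  next
    case False
    obtain v where "v \<in> {v. col v \<noteq> col u}" "g v > 0" using pos_in_sum[of g "{v. col v \<noteq> col u}"] rest
      by auto
    then show ?thesis using that False by auto
  qed
  have uv: "u \<noteq> v" using v by auto
  define g' where "g' = g(u := g u - 1, v := g v - 1)"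
  have gw: "g w = g' w + (if u = w then 1 else 0) + (if v = w then 1 else 0)" for w
    using u v uv by (auto simp: g'_def)
  have gS: "sum g S = sum g' S + (if u \<in> S then 1 else 0) + (if v \<in> S then 1 else 0)" for S
  proof -
    have "sum g S = sum g' S + sum (\<lambda>w. if u = w then 1 else 0) S + sum (\<lambda>w. if v = w then 1 else 0) S"
    proof -
      have "sum g S = (\<Sum>w\<in>S. g' w + (if u = w then 1 else 0) + (if v = w then 1 else 0))"
        by (rule sum.cong[OF refl]) (rule gw)
      then show ?thesis by (simp add: sum.distrib)
    qed
    then show ?thesis by (simp add: sum.delta)
  qed
  have s': "sum g' UNIV = 2 * m" using gS[of UNIV] Suc.prems(1) by simp
  have W': "sum g' {w. col w = k} \<le> m" for k
  proof -
    have e: "W k = sum g' {w. col w = k} + (if col u = k then 1 else 0) + (if col v = k then 1 else 0)"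
      using gS[of "{w. col w = k}"] by (simp add: W_def)
    show ?thesis
    proof (cases "col u = k \<or> col v = k")
      case True
      then show ?thesis using e Wle[of k] v(1) by auto
    next
      case False
      have "W k \<noteq> Suc m"
      proof
        assume Wk: "W k = Suc m"
        then have "W (col u) = Suc m" using u by blast
        moreover have "W (col v) = Suc m" using v(3) Wk False by (metis (mono_tags))
        moreover have "W (col u) + W (col v) + W k \<le> sum g UNIV"
          unfolding W_def by (rule three_parts) (use False v(1) in auto)
        ultimately show False using Wk Suc.prems(1) by simp
      qed
      then show ?thesis using e Wle[of k] False by auto
    qed
  qed
  obtain f' where f': "\<forall>i<m. col (fst (f' i)) \<noteq> col (snd (f' i))"
    "\<forall>w. g' w = (\<Sum>i<m. (if fst (f' i) = w then 1 else 0) + (if snd (f' i) = w then 1 else 0))"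
    using Suc.IH[OF s' W'] by blast
  define f where "f = f'(m := (u, v))"
  have fi: "i < m \<Longrightarrow> f i = f' i" for i by (simp add: f_def)
  show ?case
  proof (intro exI[of _ f] conjI allI impI)
    fix i assume "i < Suc m"
    then show "col (fst (f i)) \<noteq> col (snd (f i))"
      using f'(1) v(1) by (cases "i = m") (auto simp: f_def)
  next
    fix w
    have "(\<Sum>i<Suc m. (if fst (f i) = w then 1::nat else 0) + (if snd (f i) = w then 1 else 0))
        = (\<Sum>i<m. (if fst (f' i) = w then 1 else 0) + (if snd (f' i) = w then 1 else 0))
          + ((if u = w then 1 else 0) + (if v = w then 1 else 0))"
    proof -
      have "(\<Sum>i<m. (if fst (f i) = w then 1::nat else 0) + (if snd (f i) = w then 1 else 0))
          = (\<Sum>i<m. (if fst (f' i) = w then 1 else 0) + (if snd (f' i) = w then 1 else 0))"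
        by (rule sum.cong) (auto simp: fi)
      moreover have "f m = (u, v)" by (simp add: f_def)
      ultimately show ?thesis by simp
    qed
    then show "g w = (\<Sum>i<Suc m. (if fst (f i) = w then 1 else 0) + (if snd (f i) = w then 1 else 0))"
      using gw[of w] f'(2) by simp
  qed
qed




lemma fin_sumset: "finite {g::'n::finite \<Rightarrow> nat. sum g UNIV = N}"
proof -
  have sub: "{g::'n \<Rightarrow> nat. sum g UNIV = N} \<subseteq> {f. \<forall>x. (x \<in> (UNIV::'n set) \<longrightarrow> f x \<in> {..N}) \<and> (x \<notin> UNIV \<longrightarrow> f x = 0)}"
  proof (rule subsetI)
    fix g :: "'n \<Rightarrow> nat" assume g: "g \<in> {g::'n \<Rightarrow> nat. sum g UNIV = N}"
    have "g x \<le> N" for x using member_le_sum[of x UNIV g] g by simp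
    then show "g \<in> {f. \<forall>x. (x \<in> (UNIV::'n set) \<longrightarrow> f x \<in> {..N}) \<and> (x \<notin> UNIV \<longrightarrow> f x = 0)}"
      by simp
  qed
  show ?thesis by (rule finite_subset[OF sub finite_set_of_finite_funs]) simp_all
qed

lemma card_compl_sum: "card (V::'n::finite set) + card (- V) = CARD('n)"
  using card_Un_disjoint[of V "-V"] by (simp add: Un_commute)

lemma B_card:
  fixes V :: "'n::finite set"
  assumes m: "m \<ge> 1"
  shows "card {g::'n \<Rightarrow> nat. sum g UNIV = 2*m \<and> m+1 \<le> sum g V} = Rd m CARD('n) (card V)"
proof -
  define S where "S s = {g::'n \<Rightarrow> nat. sum g UNIV = 2*m \<and> sum g V = s}" for s
  have eq: "{g::'n \<Rightarrow> nat. sum g UNIV = 2*m \<and> m+1 \<le> sum g V} = (\<Union>s\<in>{m+1..2*m}. S s)"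
  proof (rule set_eqI, rule iffI)
    fix g assume g: "g \<in> {g::'n \<Rightarrow> nat. sum g UNIV = 2*m \<and> m+1 \<le> sum g V}"
    have "sum g V \<le> sum g UNIV" by (rule sum_mono2) auto
    then show "g \<in> (\<Union>s\<in>{m+1..2*m}. S s)" using g by (auto simp: S_def)
  qed (auto simp: S_def)
  have fin: "finite (S s)" for s
    by (rule finite_subset[OF _ fin_sumset[of "2*m"]]) (auto simp: S_def)
  have "card (\<Union>s\<in>{m+1..2*m}. S s) = (\<Sum>s\<in>{m+1..2*m}. card (S s))"
    by (rule card_UN_disjoint) (simp_all add: fin, auto simp: S_def)
  also have "\<dots> = (\<Sum>s\<in>{m+1..2*m}. cc (card V) s * cc (card (-V)) (2*m - s))"
    by (rule sum.cong) (auto simp: S_def split_card)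
  also have "\<dots> = LL m (card V) (card (-V))" by (simp add: LL_def)
  also have "\<dots> = Rd m CARD('n) (card V)" using LL_Rd[OF m] card_compl_sum[of V] by simp
  finally show ?thesis unfolding eq .
qed

lemma count_G:
  fixes col :: "'n::finite \<Rightarrow> nat"
  assumes m: "m \<ge> 1" and pr: "\<And>v. col v < t"
  shows "card {g::'n \<Rightarrow> nat. sum g UNIV = 2*m \<and> (\<forall>k. sum g {v. col v = k} \<le> m)}
         + (\<Sum>k<t. Rd m CARD('n) (card {v. col v = k})) = Rd m CARD('n) CARD('n)"
proof -
  define G where "G = {g::'n \<Rightarrow> nat. sum g UNIV = 2*m \<and> (\<forall>k. sum g {v. col v = k} \<le> m)}"
  define B where "B k = {g::'n \<Rightarrow> nat. sum g UNIV = 2*m \<and> m+1 \<le> sum g {v. col v = k}}" for k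
  define A where "A = {g::'n \<Rightarrow> nat. sum g UNIV = 2*m \<and> m+1 \<le> sum g UNIV}"
  have cA: "card A = Rd m CARD('n) CARD('n)" unfolding A_def using B_card[OF m, of UNIV] by simp
  have cB: "card (B k) = Rd m CARD('n) (card {v. col v = k})" for k
    unfolding B_def by (rule B_card[OF m])
  have finA: "finite A" by (rule finite_subset[OF _ fin_sumset[of "2*m"]]) (auto simp: A_def)
  have AU: "A = G \<union> (\<Union>k\<in>{..<t}. B k)"
  proof (rule set_eqI, rule iffI)
    fix g assume g: "g \<in> A"
    show "g \<in> G \<union> (\<Union>k\<in>{..<t}. B k)"
    proof (cases "\<exists>k<t. m+1 \<le> sum g {v. col v = k}")
      case True then show ?thesis using g by (auto simp: A_def B_def)
    next
      case False
      have "sum g {v. col v = k} \<le> m" for k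
      proof (cases "k < t")
        case True then show ?thesis using False by auto
      next
        case False
        have "col v \<noteq> k" for v using pr[of v] False by simp
        then have "{v. col v = k} = {}" by blast
        then show ?thesis by simp
      qed
      then show ?thesis using g by (auto simp: A_def G_def)
    qed
  next
    fix g assume "g \<in> G \<union> (\<Union>k\<in>{..<t}. B k)"
    then show "g \<in> A" using m by (auto simp: A_def G_def B_def)
  qed
  have disj2: "B k \<inter> B j = {}" if "k \<noteq> j" for k j
  proof (rule ccontr)
    assume "B k \<inter> B j \<noteq> {}"
    then obtain g where g: "g \<in> B k" "g \<in> B j" by blast
    have "sum g ({v. col v = k} \<union> {v. col v = j}) = sum g {v. col v = k} + sum g {v. col v = j}"
      using that by (intro sum.union_disjoint) auto
    moreover have "sum g ({v. col v = k} \<union> {v. col v = j}) \<le> sum g UNIV" by (rule sum_mono2) auto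
    ultimately show False using g by (simp add: B_def)
  qed
  have GB: "G \<inter> (\<Union>k\<in>{..<t}. B k) = {}"
  proof (rule ccontr)
    assume "G \<inter> (\<Union>k\<in>{..<t}. B k) \<noteq> {}"
    then obtain g k where "g \<in> G" "g \<in> B k" by blast
    then have "sum g {v. col v = k} \<le> m" "m + 1 \<le> sum g {v. col v = k}" by (auto simp: G_def B_def)
    then show False by simp
  qed
  have finU: "finite (\<Union>k\<in>{..<t}. B k)" using finA AU by auto
  have finG: "finite G" using finA AU by auto
  have "card A = card G + card (\<Union>k\<in>{..<t}. B k)"
    using AU card_Un_disjoint[OF finG finU GB] by simp
  also have "card (\<Union>k\<in>{..<t}. B k) = (\<Sum>k<t. card (B k))"
  proof (rule card_UN_disjoint)
    show "finite {..<t}" by simp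
    show "\<forall>i\<in>{..<t}. finite (B i)" using finU by (auto intro: finite_subset)
    show "\<forall>i\<in>{..<t}. \<forall>j\<in>{..<t}. i \<noteq> j \<longrightarrow> B i \<inter> B j = {}" using disj2 by blast
  qed
  finally show ?thesis using cA cB G_def by simp
qed

lemma ff_Rd:
  assumes m: "m \<ge> 1" and j: "j \<le> d"
  shows "ff m d j = real (Rd m d j)"
proof -
  have "pp m d i = real (((i+m-1) choose (i-1)) * ((d-i+m-1) choose (d-i)))" if "i \<in> {1..j}" for i
  proof -
    have a: "real i + real m - 1 = real (i+m-1)" using that by (simp add: of_nat_diff)
    have b: "real d - real i + real m - 1 = real (d-i+m-1)" using that j m by (simp add: of_nat_diff)
    show ?thesis unfolding pp_def a b by (simp add: binomial_gbinomial)
  qed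
  then show ?thesis unfolding ff_def Rd_def by (simp add: of_nat_sum)
qed




definition HH :: "('n::finite \<Rightarrow> nat) \<Rightarrow> (real^'n) set" where
  "HH col = {y. (\<forall>i. 0 \<le> y$i) \<and> (\<Sum>i\<in>UNIV. y$i) = 2 \<and> (\<forall>k. (\<Sum>i\<in>{v. col v = k}. y$i) \<le> 1)}"

lemma HH_convex: fixes col :: "'n::finite \<Rightarrow> nat" shows "convex (HH col)"
proof (rule convexI)
  fix x y :: "real^'n" and u v :: real
  assume x: "x \<in> HH col" and y: "y \<in> HH col" and u: "0 \<le> u" and v: "0 \<le> v" and uv: "u + v = 1"
  have c: "(u *\<^sub>R x + v *\<^sub>R y) $ i = u * x$i + v * y$i" for i by simp
  have s: "(\<Sum>i\<in>S. (u *\<^sub>R x + v *\<^sub>R y) $ i) = u * (\<Sum>i\<in>S. x$i) + v * (\<Sum>i\<in>S. y$i)" for S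
    by (simp add: sum.distrib sum_distrib_left)
  have nn: "0 \<le> (u *\<^sub>R x + v *\<^sub>R y) $ i" for i using x y u v by (simp add: HH_def)
  have tot: "(\<Sum>i\<in>UNIV. (u *\<^sub>R x + v *\<^sub>R y) $ i) = 2"
  proof -
    have "(\<Sum>i\<in>UNIV. (u *\<^sub>R x + v *\<^sub>R y) $ i) = u * 2 + v * 2" using x y by (simp only: s) (simp add: HH_def)
    also have "\<dots> = (u + v) * 2" by (simp add: algebra_simps)
    finally show ?thesis using uv by simp
  qed
  have pt: "(\<Sum>i\<in>{w. col w = k}. (u *\<^sub>R x + v *\<^sub>R y) $ i) \<le> 1" for k
  proof -
    have "u * (\<Sum>i\<in>{w. col w = k}. x$i) \<le> u * 1" using x u by (intro mult_left_mono) (auto simp: HH_def)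
    moreover have "v * (\<Sum>i\<in>{w. col w = k}. y$i) \<le> v * 1" using y v by (intro mult_left_mono) (auto simp: HH_def)
    ultimately show ?thesis using uv by (simp only: s)
  qed
  show "u *\<^sub>R x + v *\<^sub>R y \<in> HH col" using nn tot pt by (simp add: HH_def)
qed

lemma axis_comp: "(axis u (1::real) + axis v 1) $ i = (if u = i then 1 else 0) + (if v = i then 1 else 0)"
  by (auto simp: axis_def)

lemma E_sub: fixes col :: "'n::finite \<Rightarrow> nat" shows "cmp_edge_vectors col \<subseteq> HH col"
proof
  fix x assume "x \<in> cmp_edge_vectors col"
  then obtain u v where x: "x = axis u 1 + axis v 1" and uv: "col u \<noteq> col v"
    by (auto simp: cmp_edge_vectors_def)
  have s: "(\<Sum>i\<in>S. x $ i) = (if u \<in> S then 1 else 0) + (if v \<in> S then 1 else 0)" for S :: "'n set"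
  proof -
    have "(\<Sum>i\<in>S. x $ i) = (\<Sum>i\<in>S. (if u = i then 1 else 0) + (if v = i then 1 else 0))"
      by (rule sum.cong) (auto simp: x axis_def)
    then show ?thesis by (simp add: sum.distrib sum.delta)
  qed
  have "(\<Sum>i\<in>{w. col w = k}. x$i) \<le> 1" for k using uv by (simp add: s)
  moreover have "0 \<le> x $ i" for i by (simp add: x axis_def)
  ultimately show "x \<in> HH col" by (simp add: HH_def s)
qed

lemma P_sub: "edge_polytope col \<subseteq> HH col"
  unfolding edge_polytope_def by (rule hull_minimal) (rule E_sub, rule HH_convex)

definition vecg :: "('n::finite \<Rightarrow> nat) \<Rightarrow> real^'n" where "vecg g = (\<chi> i. real (g i))"

lemma inj_vecg: "inj vecg"
  by (rule injI) (simp add: vecg_def vec_eq_iff fun_eq_iff)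

lemma lat_sub:
  fixes col :: "'n::finite \<Rightarrow> nat"
  assumes "x \<in> {x \<in> (\<lambda>y. real m *\<^sub>R y) ` edge_polytope col. \<forall>i. x $ i \<in> \<int>}"
  shows "x \<in> vecg ` {g. sum g UNIV = 2*m \<and> (\<forall>k. sum g {v. col v = k} \<le> m)}"
proof -
  obtain y where y: "y \<in> edge_polytope col" and xy: "x = real m *\<^sub>R y" and xi: "\<forall>i. x $ i \<in> \<int>"
    using assms by auto
  have yH: "y \<in> HH col" using y P_sub by blast
  define g where "g i = nat \<lfloor>x $ i\<rfloor>" for i
  have g: "real (g i) = x $ i" for i
  proof -
    have "0 \<le> x $ i" using yH xy by (simp add: HH_def)
    then show ?thesis using xi by (simp add: g_def)
  qed
  have sg: "real (sum g S) = real m * (\<Sum>i\<in>S. y$i)" for S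
    by (simp add: of_nat_sum g xy sum_distrib_left)
  have "real (sum g UNIV) = real (2*m)" using sg[of UNIV] yH by (simp add: HH_def)
  then have t: "sum g UNIV = 2*m" by (simp only: of_nat_eq_iff)
  have "real (sum g {v. col v = k}) \<le> real m" for k
  proof -
    have "real m * (\<Sum>i\<in>{v. col v = k}. y$i) \<le> real m * 1"
      using yH by (intro mult_left_mono) (auto simp: HH_def)
    then show ?thesis using sg by simp
  qed
  then have p: "sum g {v. col v = k} \<le> m" for k by (simp only: of_nat_le_iff)
  have "x = vecg g" by (simp add: vecg_def vec_eq_iff g)
  then show ?thesis using t p by blast
qed

lemma lat_sup:
  fixes col :: "'n::finite \<Rightarrow> nat"
  assumes m: "m \<ge> 1" and t: "sum g UNIV = 2*m" and p: "\<And>k. sum g {v. col v = k} \<le> m"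
  shows "vecg g \<in> {x \<in> (\<lambda>y. real m *\<^sub>R y) ` edge_polytope col. \<forall>i. x $ i \<in> \<int>}"
proof -
  obtain f where f1: "\<forall>i<m. col (fst (f i)) \<noteq> col (snd (f i))"
    and f2: "\<forall>w. g w = (\<Sum>i<m. (if fst (f i) = w then 1 else 0) + (if snd (f i) = w then 1 else 0))"
    using decomp[of g m col, OF t p] by blast
  define e where "e i = axis (fst (f i)) (1::real) + axis (snd (f i)) 1" for i
  have eE: "e i \<in> cmp_edge_vectors col" if "i < m" for i
    using f1 that by (auto simp: e_def cmp_edge_vectors_def)
  have vg: "vecg g = (\<Sum>i<m. e i)"
  proof (subst vec_eq_iff, rule allI)
    fix w
    have "real (g w) = (\<Sum>i<m. (if fst (f i) = w then 1 else 0) + (if snd (f i) = w then 1 else 0))"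
      using f2 by (auto simp: of_nat_sum intro!: sum.cong)
    then show "vecg g $ w = (\<Sum>i<m. e i) $ w" by (auto simp: vecg_def e_def axis_def intro!: sum.cong)
  qed
  define y where "y = (\<Sum>i<m. (1 / real m) *\<^sub>R e i)"
  have "y \<in> convex hull (cmp_edge_vectors col)"
    unfolding y_def
  proof (rule convex_sum)
    show "(\<Sum>i<m. 1 / real m) = 1" using m by simp
  qed (auto intro: hull_inc eE)
  then have yP: "y \<in> edge_polytope col" by (simp add: edge_polytope_def)
  have "real m *\<^sub>R y = vecg g"
    using m by (simp add: y_def vg scaleR_sum_right)
  moreover have "\<forall>i. vecg g $ i \<in> \<int>" by (simp add: vecg_def)
  moreover have "vecg g \<in> (\<lambda>y. real m *\<^sub>R y) ` edge_polytope col"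
    by (rule image_eqI[where x = y]) (use calculation yP in auto)
  ultimately show ?thesis by blast
qed




lemma pp0:
  assumes "1 \<le> i" "i \<le> d"
  shows "pp 0 d i = (if i = d then 1 else 0)"
proof -
  have a: "real i + real 0 - 1 = real (i - 1)" using assms by (simp add: of_nat_diff)
  have a': "(real (i - 1) gchoose (i - 1)) = (1::real)"
    using binomial_gbinomial[of "i - 1" "i - 1", where 'a=real] by simp
  show ?thesis
  proof (cases "i = d")
    case True
    then show ?thesis unfolding pp_def a a' by simp
  next
    case False
    then have b: "real d - real i + real 0 - 1 = real (d - i - 1)" using assms by (simp add: of_nat_diff)
    have "(real (d - i - 1) gchoose (d - i)) = real ((d - i - 1) choose (d - i))"
      by (rule binomial_gbinomial[symmetric])
    also have "\<dots> = 0" using False assms by simp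
    finally have "(real (d - i - 1) gchoose (d - i)) = (0::real)" .
    then show ?thesis unfolding pp_def a a' b using False by simp
  qed
qed

lemma ff0:
  assumes "1 \<le> j" "j \<le> d"
  shows "ff 0 d j = (if j = d then 1 else 0)"
proof -
  have "ff 0 d j = (\<Sum>i\<in>{1..j}. if i = d then 1 else 0)"
    unfolding ff_def using assms by (intro sum.cong) (auto simp: pp0)
  also have "\<dots> = (if d \<in> {1..j} then 1 else 0)" by (simp add: sum.delta')
  finally show ?thesis using assms by auto
qed

theorem proposition1p3:
  fixes t :: nat and q :: "nat \<Rightarrow> nat" and col :: "'n::finite \<Rightarrow> nat" and m :: nat
  assumes qpos: "\<And>k. k < t \<Longrightarrow> q k > 0"
    and part_range: "\<And>v. col v < t"
    and part_card: "\<And>k. k < t \<Longrightarrow> card {v. col v = k} = q k"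
  shows "real (lattice_count (edge_polytope col) m) =
           ff m CARD('n) CARD('n) - (\<Sum>k<t. ff m CARD('n) (q k))"
proof -
  have qle: "q k \<le> CARD('n)" if "k < t" for k
    using part_card[OF that] card_mono[of UNIV "{v. col v = k}"] by simp
  have dpos: "CARD('n) \<ge> 1" by (simp add: Suc_le_eq)
  show ?thesis
  proof (cases "m = 0")
    case False
    then have m: "m \<ge> 1" by simp
    define G where "G = {g::'n \<Rightarrow> nat. sum g UNIV = 2*m \<and> (\<forall>k. sum g {v. col v = k} \<le> m)}"
    have L: "{x \<in> (\<lambda>y. real m *\<^sub>R y) ` edge_polytope col. \<forall>i. x $ i \<in> \<int>} = vecg ` G"
    proof
      show "{x \<in> (\<lambda>y. real m *\<^sub>R y) ` edge_polytope col. \<forall>i. x $ i \<in> \<int>} \<subseteq> vecg ` G"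
        unfolding G_def using lat_sub by blast
      show "vecg ` G \<subseteq> {x \<in> (\<lambda>y. real m *\<^sub>R y) ` edge_polytope col. \<forall>i. x $ i \<in> \<int>}"
        unfolding G_def using lat_sup[OF m] by blast
    qed
    have lc: "lattice_count (edge_polytope col) m = card G"
      unfolding lattice_count_def L
      by (rule card_image) (rule inj_on_subset[OF inj_vecg], simp)
    have cnt: "card G + (\<Sum>k<t. Rd m CARD('n) (card {v. col v = k})) = Rd m CARD('n) CARD('n)"
      unfolding G_def by (rule count_G[OF m part_range])
    have s: "(\<Sum>k<t. Rd m CARD('n) (card {v. col v = k})) = (\<Sum>k<t. Rd m CARD('n) (q k))"
      by (rule sum.cong) (auto simp: part_card)
    have f1: "ff m CARD('n) CARD('n) = real (Rd m CARD('n) CARD('n))" by (rule ff_Rd[OF m]) simp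
    have f2: "(\<Sum>k<t. ff m CARD('n) (q k)) = real (\<Sum>k<t. Rd m CARD('n) (q k))"
      unfolding of_nat_sum by (rule sum.cong) (auto intro: ff_Rd[OF m] qle)
    have "real (card G) + real (\<Sum>k<t. Rd m CARD('n) (q k)) = real (Rd m CARD('n) CARD('n))"
      using cnt s by (metis of_nat_add)
    then show ?thesis unfolding lc f1 f2 by linarith
  next
    case True
    have L0: "{x \<in> (\<lambda>y. real m *\<^sub>R y) ` edge_polytope col. \<forall>i. x $ i \<in> \<int>}
            = (if cmp_edge_vectors col = {} then {} else {0})"
    proof (cases "cmp_edge_vectors col = {}")
      case True
      then show ?thesis by (simp add: edge_polytope_def)
    next
      case False
      then obtain e where e: "e \<in> cmp_edge_vectors col" by blast
      then have eP: "e \<in> edge_polytope col" unfolding edge_polytope_def by (rule hull_inc)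
      have "(\<lambda>y. real m *\<^sub>R y) ` edge_polytope col = {0}"
        using \<open>m = 0\<close> eP by auto
      then show ?thesis using False by auto
    qed
    have t1: "t \<ge> 1" using part_range[of undefined] by simp
    show ?thesis
    proof (cases "t = 1")
      case True
      then have c0: "col v = 0" for v using part_range[of v] by simp
      then have "cmp_edge_vectors col = {}" by (auto simp: cmp_edge_vectors_def)
      then have "lattice_count (edge_polytope col) m = 0" unfolding lattice_count_def L0 by simp
      moreover have "q 0 = CARD('n)" using part_card[of 0] True c0 by simp
      ultimately show ?thesis using True by simp
    next
      case False
      then have t2: "t \<ge> 2" using t1 by simp
      have ne: "\<exists>v. col v = k" if "k < t" for k
      proof -
        have "card {v. col v = k} > 0" using part_card[OF that] qpos[OF that] by simp
        then have "{v. col v = k} \<noteq> {}" by (metis card.empty less_irrefl)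
        then show ?thesis by blast
      qed
      obtain u0 where u0: "col u0 = 0" using ne[of 0] t2 by auto
      obtain u1 where u1: "col u1 = 1" using ne[of 1] t2 by auto
      have "axis u0 1 + axis u1 1 \<in> cmp_edge_vectors col"
        unfolding cmp_edge_vectors_def using u0 u1 by (intro CollectI exI[of _ u0] exI[of _ u1]) simp
      then have "cmp_edge_vectors col \<noteq> {}" by blast
      then have lc: "lattice_count (edge_polytope col) m = 1" unfolding lattice_count_def L0 by simp
      have qlt: "q k < CARD('n)" if "k < t" for k
      proof -
        obtain w where "col w \<noteq> k" using u0 u1 by (metis zero_neq_one)
        then have "{v. col v = k} \<subset> UNIV" by blast
        then have "card {v. col v = k} < CARD('n)" by (rule psubset_card_mono[OF finite])
        then show ?thesis using part_card[OF that] by simp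
      qed
      have "(\<Sum>k<t. ff m CARD('n) (q k)) = 0"
      proof (intro sum.neutral ballI)
        fix k assume "k \<in> {..<t}"
        then have k: "k < t" by simp
        then have "1 \<le> q k" using qpos by (simp add: Suc_le_eq)
        then show "ff m CARD('n) (q k) = 0" using ff0[OF _ qle[OF k]] qlt[OF k] True by simp
      qed
      moreover have "ff m CARD('n) CARD('n) = 1" using True dpos by (simp add: ff0)
      ultimately show ?thesis using lc by simp
    qed
  qed
qed


end
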